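(* Let $I$ be a monoid with identity $1$ and let $\mathrm{Inv}=\mathrm{Map}^l_I\circ\mathrm{Map}^r_I$, restricted to the category $\mathrm{bAct}(I)$ of finite $I$-sets. For $M$ in $\mathrm{bAct}(I)$ let $\overline{\mathrm{ev}}_M:\mathrm{Inv}(M)\to M$, $f\mapsto f(1)(1)$. Then the maps $\overline{\mathrm{ev}}_{\mathrm{Inv}(M)}:\mathrm{Inv}(\mathrm{Inv}(M))\to\mathrm{Inv}(M)$ define a natural isomorphism $\mathrm{Inv}\circ\mathrm{Inv}\Rightarrow\mathrm{Inv}$.
   Context: Let $I$ be a monoid with operation $\otimes$. For a set $X$, $\mathrm{End}_l(X)$ denotes self-maps written on the left with product $f\circ g$ ($g$ first); $\mathrm{End}_r(X)$ denotes self-maps written on the right, $x\mapsto(x)f$, with $(x)(fg)=((x)f)g$. An $I$-set is a set $X$ with a pair $\xi=(\xi_l,\xi_r)$ of monoid homomorphisms $\xi_l:I\to\mathrm{End}_l(X)$, $\xi_r:I\to\mathrm{End}_r(X)$ with $(\xi_l(i)(x))\xi_r(j)=\xi_l(i)((x)\xi_r(j))$; $f:(X,\xi)\to(Y,\eta)$ is $I$-equivariant if $(f(\xi_l(i)(x)))\eta_r(i)=\eta_l(i)(f((x)\xi_r(i)))$ for all $i,x$. An $I$-set is invertible on one side if either $\xi_l(i)$ is bijective for all $i$ or $\xi_r(i)$ is bijective for all $i$; $\mathrm{bAct}(I)$ is the category of finite $I$-sets that are products (componentwise action) of $I$-sets invertible on one side, with $I$-equivariant maps. For an $I$-set $(A,\alpha)$: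 $\mathrm{Map}^l_I(A)$ is the set of $f:I\to A$ with $(f(j))\alpha_r(i)=\alpha_l(i)(f(j\otimes i))$ for all $i,j$, with action $\theta_l(k)=\mathrm{id}$, $((f)\theta_r(k))(j)=f(k\otimes j)$; $\mathrm{Map}^r_I(A)$ is the set of $f:I\to A$ with $(f(i\otimes j))\alpha_r(i)=\alpha_l(i)(f(j))$ for all $i,j$, with action $(\vartheta_l(k)(f))(i)=f(i\otimes k)$, $\vartheta_r(k)=\mathrm{id}$. Both are functors via $u\mapsto(h\mapsto u\circ h)$. *)

theory Defs
  imports Main "HOL-Library.FuncSet"
begin

text \<open>The monoid I is modelled as a type of class monoid_mult: the monoid operation
  is written (*) and the identity 1.
  An I-set is a carrier set together with a left action (xl i : X -> X, written on the left)
  and a right action (xr i x stands for (x) xi_r(i)).\<close>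

record ('i, 'a) iset =
  iset_carrier :: "'a set"
  iset_actl :: "'i \<Rightarrow> 'a \<Rightarrow> 'a"
  iset_actr :: "'i \<Rightarrow> 'a \<Rightarrow> 'a"

definition is_iset :: "('i::monoid_mult, 'a) iset \<Rightarrow> bool" where
  "is_iset X \<longleftrightarrow>
     (\<forall>i. \<forall>x\<in>iset_carrier X. iset_actl X i x \<in> iset_carrier X \<and> iset_actr X i x \<in> iset_carrier X)
   \<and> (\<forall>x\<in>iset_carrier X. iset_actl X 1 x = x \<and> iset_actr X 1 x = x)
   \<and> (\<forall>i j. \<forall>x\<in>iset_carrier X. iset_actl X (i * j) x = iset_actl X i (iset_actl X j x))
   \<and> (\<forall>i j. \<forall>x\<in>iset_carrier X. iset_actr X (i * j) x = iset_actr X j (iset_actr X i x))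
   \<and> (\<forall>i j. \<forall>x\<in>iset_carrier X.
        iset_actr X j (iset_actl X i x) = iset_actl X i (iset_actr X j x))"

definition one_side_invertible :: "('i::monoid_mult, 'a) iset \<Rightarrow> bool" where
  "one_side_invertible X \<longleftrightarrow>
     (\<forall>i. bij_betw (iset_actl X i) (iset_carrier X) (iset_carrier X))
   \<or> (\<forall>i. bij_betw (iset_actr X i) (iset_carrier X) (iset_carrier X))"

definition equivariant :: "('i::monoid_mult, 'a) iset \<Rightarrow> ('i, 'b) iset \<Rightarrow> ('a \<Rightarrow> 'b) \<Rightarrow> bool" where
  "equivariant X Y f \<longleftrightarrow>
     f ` iset_carrier X \<subseteq> iset_carrier Y
   \<and> (\<forall>i. \<forall>x\<in>iset_carrier X.
        iset_actr Y i (f (iset_actl X i x)) = iset_actl Y i (f (iset_actr X i x)))"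

definition bAct :: "('i::monoid_mult, 'a) iset \<Rightarrow> bool" where
  "bAct M \<longleftrightarrow> is_iset M \<and> finite (iset_carrier M) \<and>
     (\<exists>(n::nat) (X :: nat \<Rightarrow> ('i, 'a) iset) \<phi>.
        (\<forall>k<n. is_iset (X k) \<and> one_side_invertible (X k))
      \<and> bij_betw \<phi> (iset_carrier M) (PiE {..<n} (\<lambda>k. iset_carrier (X k)))
      \<and> (\<forall>i. \<forall>x\<in>iset_carrier M.
           \<phi> (iset_actl M i x) = (\<lambda>k\<in>{..<n}. iset_actl (X k) i (\<phi> x k))
         \<and> \<phi> (iset_actr M i x) = (\<lambda>k\<in>{..<n}. iset_actr (X k) i (\<phi> x k))))"

definition MapL :: "('i::monoid_mult, 'a) iset \<Rightarrow> ('i, 'i \<Rightarrow> 'a) iset" where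
  "MapL A = \<lparr> iset_carrier = {f. (\<forall>j. f j \<in> iset_carrier A) \<and>
                  (\<forall>i j. iset_actr A i (f j) = iset_actl A i (f (j * i)))},
             iset_actl = (\<lambda>k f. f),
             iset_actr = (\<lambda>k f. (\<lambda>j. f (k * j))) \<rparr>"

definition MapR :: "('i::monoid_mult, 'a) iset \<Rightarrow> ('i, 'i \<Rightarrow> 'a) iset" where
  "MapR A = \<lparr> iset_carrier = {f. (\<forall>j. f j \<in> iset_carrier A) \<and>
                  (\<forall>i j. iset_actr A i (f (i * j)) = iset_actl A i (f j))},
             iset_actl = (\<lambda>k f. (\<lambda>i. f (i * k))),
             iset_actr = (\<lambda>k f. f) \<rparr>"

definition Map_mor :: "('a \<Rightarrow> 'b) \<Rightarrow> ('i \<Rightarrow> 'a) \<Rightarrow> ('i \<Rightarrow> 'b)" where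
  "Map_mor u h = u \<circ> h"

definition Inv :: "('i::monoid_mult, 'a) iset \<Rightarrow> ('i, 'i \<Rightarrow> 'i \<Rightarrow> 'a) iset" where
  "Inv M = MapL (MapR M)"

definition Inv_mor :: "('a \<Rightarrow> 'b) \<Rightarrow> ('i \<Rightarrow> 'i \<Rightarrow> 'a) \<Rightarrow> ('i \<Rightarrow> 'i \<Rightarrow> 'b)" where
  "Inv_mor u = Map_mor (Map_mor u)"

definition evbar :: "('i::monoid_mult \<Rightarrow> 'i \<Rightarrow> 'a) \<Rightarrow> 'a" where
  "evbar f = f 1 1"

end

theory Submission
  imports Defs
begin

definition validI :: "('i::monoid_mult, 'a) iset \<Rightarrow> ('i \<Rightarrow> 'i \<Rightarrow> 'a) \<Rightarrow> bool" where
  "validI X H \<longleftrightarrow> (\<forall>j x. H j x \<in> iset_carrier X) \<and> (\<forall>i j x. H j x = H (j*i) (x*i))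
     \<and> (\<forall>i j x. iset_actr X i (H j (i*x)) = iset_actl X i (H j x))"

definition Tm :: "'i::monoid_mult \<Rightarrow> ('i \<Rightarrow> 'b) \<Rightarrow> ('i \<Rightarrow> 'b)" where
  "Tm k F = (\<lambda>j. F (k*j))"

lemma carrier_Inv: "iset_carrier (Inv M) = {H. validI M H}"
  unfolding Inv_def MapL_def MapR_def validI_def by (auto simp: fun_eq_iff)

lemma Inv_actl[simp]: "iset_actl (Inv M) i F = F"
  by (simp add: Inv_def MapL_def)

lemma Inv_actr[simp]: "iset_actr (Inv M) k F = Tm k F"
  by (simp add: Inv_def MapL_def Tm_def)

lemma validI_car: "validI X H \<Longrightarrow> H j x \<in> iset_carrier X"
  unfolding validI_def by blast
lemma validI_a: "validI X H \<Longrightarrow> H j x = H (j*i) (x*i)"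
  unfolding validI_def by blast
lemma validI_b: "validI X H \<Longrightarrow> iset_actr X i (H j (i*x)) = iset_actl X i (H j x)"
  unfolding validI_def by blast

lemma validI_diag: "validI X H \<Longrightarrow> H j j = H 1 1"
  using validI_a[of X H 1 1 j] by simp
lemma validI_b1: "validI X H \<Longrightarrow> iset_actr X i (H j i) = iset_actl X i (H j 1)"
  using validI_b[of X H i j 1] by simp
lemma validI_g: "validI X H \<Longrightarrow> iset_actr X i (H j 1) = iset_actl X i (H (j*i) 1)"
proof -
  assume v: "validI X H"
  have "H j 1 = H (j*i) i" using validI_a[OF v, of j 1 i] by simp
  thus ?thesis using validI_b1[OF v, of i "j*i"] by simp
qed
lemma validI_0: "validI X H \<Longrightarrow> iset_actr X j (H 1 1) = iset_actl X j (H j 1)"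
  using validI_g[of X H j 1] by simp

lemma inj_incl:
  assumes "finite Z" "inj_on f Z" "f ` Z \<subseteq> g ` Z"
  shows "inj_on g Z"
proof -
  have "card Z = card (f ` Z)" using assms(2) card_image by metis
  also have "\<dots> \<le> card (g ` Z)" using assms by (intro card_mono) auto
  finally have "card Z \<le> card (g ` Z)" .
  moreover have "card (g ` Z) \<le> card Z" by (rule card_image_le) fact
  ultimately show ?thesis using inj_on_iff_eq_card assms(1) by (metis antisym)
qed

lemma comp_unique:
  assumes fin: "finite (iset_carrier X)" and osi: "one_side_invertible X"
    and v: "validI X H" and v': "validI X H'" and e: "H 1 1 = H' 1 1"
  shows "H = H'"
proof -
  let ?C = "iset_carrier X"
  let ?l = "iset_actl X" and ?r = "iset_actr X"
  have "\<forall>j x. H j x = H' j x"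
  proof (cases "\<forall>i. bij_betw (?l i) ?C ?C")
    case True
    hence injl: "inj_on (?l i) ?C" for i using bij_betw_imp_inj_on by blast
    have h1: "H j 1 = H' j 1" for j
    proof -
      have "?l j (H j 1) = ?l j (H' j 1)"
        using validI_0[OF v, of j] validI_0[OF v', of j] e by simp
      thus ?thesis using injl[of j] validI_car[OF v] validI_car[OF v'] by (meson inj_onD)
    qed
    define E where "E = {y. \<exists>G j x. validI X G \<and> y = G j x}"
    have EC: "E \<subseteq> ?C" unfolding E_def using validI_car by blast
    hence finE: "finite E" using fin finite_subset by blast
    have "inj_on (?r i) E" for i
    proof (rule inj_incl[OF finE])
      show "inj_on (?l i) E" using injl[of i] EC inj_on_subset by blast
      show "?l i ` E \<subseteq> ?r i ` E"
      proof
        fix z assume "z \<in> ?l i ` E"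
        then obtain G j x where G: "validI X G" "z = ?l i (G j x)" unfolding E_def by blast
        hence "z = ?r i (G j (i*x))" using validI_b[OF G(1)] by simp
        moreover have "G j (i*x) \<in> E" unfolding E_def using G by blast
        ultimately show "z \<in> ?r i ` E" by blast
      qed
    qed
    moreover have "H j x \<in> E" "H' j x \<in> E" for j x unfolding E_def using v v' by blast+
    moreover have "?r x (H j x) = ?r x (H' j x)" for j x
      using validI_b1[OF v, of x j] validI_b1[OF v', of x j] h1 by simp
    ultimately show ?thesis by (meson inj_onD)
  next
    case False
    hence "\<forall>i. bij_betw (?r i) ?C ?C" using osi unfolding one_side_invertible_def by blast
    hence injr: "inj_on (?r i) ?C" for i using bij_betw_imp_inj_on by blast
    define D where "D = {y. \<exists>G j. validI X G \<and> y = G j 1}"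
    have DC: "D \<subseteq> ?C" unfolding D_def using validI_car by blast
    hence finD: "finite D" using fin finite_subset by blast
    have injlD: "inj_on (?l i) D" for i
    proof (rule inj_incl[OF finD])
      show "inj_on (?r i) D" using injr[of i] DC inj_on_subset by blast
      show "?r i ` D \<subseteq> ?l i ` D"
      proof
        fix z assume "z \<in> ?r i ` D"
        then obtain G j where G: "validI X G" "z = ?r i (G j 1)" unfolding D_def by blast
        hence "z = ?l i (G (j*i) 1)" using validI_g[OF G(1)] by simp
        moreover have "G (j*i) 1 \<in> D" unfolding D_def using G by blast
        ultimately show "z \<in> ?l i ` D" by blast
      qed
    qed
    have h1: "H j 1 = H' j 1" for j
    proof -
      have "?l j (H j 1) = ?l j (H' j 1)"
        using validI_0[OF v, of j] validI_0[OF v', of j] e by simp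
      moreover have "H j 1 \<in> D" "H' j 1 \<in> D" unfolding D_def using v v' by blast+
      ultimately show ?thesis using injlD[of j] by (meson inj_onD)
    qed
    have "?r x (H j x) = ?r x (H' j x)" for j x
      using validI_b1[OF v, of x j] validI_b1[OF v', of x j] h1 by simp
    thus ?thesis using injr validI_car[OF v] validI_car[OF v'] by (meson inj_onD)
  qed
  thus ?thesis by (simp add: fun_eq_iff)
qed


lemma bAct_evbar_inj:
  fixes M :: "('i::monoid_mult, 'a) iset"
  assumes b: "bAct M" and v: "validI M G" and v': "validI M G'" and e: "G 1 1 = G' 1 1"
  shows "G = G'"
proof -
  obtain n and X :: "nat \<Rightarrow> ('i, 'a) iset" and \<phi> where finM: "finite (iset_carrier M)"
    and Xs: "\<forall>k<n. is_iset (X k) \<and> one_side_invertible (X k)"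
    and bij: "bij_betw \<phi> (iset_carrier M) (PiE {..<n} (\<lambda>k. iset_carrier (X k)))"
    and act: "\<forall>i. \<forall>x\<in>iset_carrier M. \<phi> (iset_actl M i x) = (\<lambda>k\<in>{..<n}. iset_actl (X k) i (\<phi> x k))
         \<and> \<phi> (iset_actr M i x) = (\<lambda>k\<in>{..<n}. iset_actr (X k) i (\<phi> x k))"
    using b unfolding bAct_def by blast
  let ?P = "PiE {..<n} (\<lambda>k. iset_carrier (X k))"
  have phiP: "\<phi> m \<in> ?P" if "m \<in> iset_carrier M" for m using bij that bij_betwE by blast
  have Pne: "?P \<noteq> {}" using phiP[OF validI_car[OF v]] by blast
  have finP: "finite ?P" using bij finM bij_betw_finite by blast
  have finX: "finite (iset_carrier (X k))" if k: "k < n" for k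
  proof -
    obtain p0 where p0: "p0 \<in> ?P" using Pne by blast
    have "iset_carrier (X k) \<subseteq> (\<lambda>p. p k) ` ?P"
    proof
      fix y assume y: "y \<in> iset_carrier (X k)"
      have "p0(k := y) \<in> ?P" using p0 y k by (auto simp: PiE_iff extensional_def)
      moreover have "y = (p0(k := y)) k" by simp
      ultimately show "y \<in> (\<lambda>p. p k) ` ?P" by blast
    qed
    thus ?thesis using finP by (meson finite_imageI finite_subset)
  qed
  have vk: "validI (X k) (\<lambda>j x. \<phi> (H j x) k)" if vH: "validI M H" and k: "k < n" for H k
    unfolding validI_def
  proof (intro conjI allI)
    fix j x
    show "\<phi> (H j x) k \<in> iset_carrier (X k)"
      using PiE_mem[OF phiP[OF validI_car[OF vH]]] k by simp
  next
    fix i j x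
    show "\<phi> (H j x) k = \<phi> (H (j * i) (x * i)) k" using validI_a[OF vH] by metis
  next
    fix i j x
    have "iset_actr (X k) i (\<phi> (H j (i*x)) k) = \<phi> (iset_actr M i (H j (i*x))) k"
      using act validI_car[OF vH] k by simp
    also have "\<dots> = \<phi> (iset_actl M i (H j x)) k" using validI_b[OF vH] by simp
    also have "\<dots> = iset_actl (X k) i (\<phi> (H j x) k)"
      using act validI_car[OF vH] k by simp
    finally show "iset_actr (X k) i (\<phi> (H j (i*x)) k) = iset_actl (X k) i (\<phi> (H j x) k)" .
  qed
  have comp: "(\<lambda>j x. \<phi> (G j x) k) = (\<lambda>j x. \<phi> (G' j x) k)" if k: "k < n" for k
    using comp_unique[OF finX[OF k] _ vk[OF v k] vk[OF v' k]] Xs k e by simp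
  have "\<phi> (G j x) = \<phi> (G' j x)" for j x
  proof
    fix k show "\<phi> (G j x) k = \<phi> (G' j x) k"
    proof (cases "k < n")
      case True thus ?thesis using comp[OF True] by (metis)
    next
      case False thus ?thesis
        using PiE_arb[OF phiP[OF validI_car[OF v]]] PiE_arb[OF phiP[OF validI_car[OF v']]] by simp
    qed
  qed
  hence "G j x = G' j x" for j x
    using bij_betw_imp_inj_on[OF bij] validI_car[OF v] validI_car[OF v'] by (meson inj_onD)
  thus ?thesis by (simp add: fun_eq_iff)
qed

lemma Tm_valid: assumes v: "validI M G" shows "validI M (Tm k G)"
  unfolding Tm_def validI_def
proof (intro conjI allI)
  fix i j x
  show "G (k * j) x \<in> iset_carrier M" using validI_car[OF v] .
  show "G (k * j) x = G (k * (j * i)) (x * i)" using validI_a[OF v, of "k*j" x i] by (simp add: mult.assoc)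
  show "iset_actr M i (G (k * j) (i * x)) = iset_actl M i (G (k * j) x)" using validI_b[OF v] .
qed

lemma Tm_comp: "Tm (a*b) F = Tm b (Tm a F)"
  unfolding Tm_def by (simp add: mult.assoc)

lemma Tm_one[simp]: "Tm 1 F = F"
  unfolding Tm_def by simp

lemma Tm_inj:
  assumes b: "bAct M" and v: "validI M G" and v': "validI M G'" and e: "Tm k G = Tm k G'"
  shows "G = G'"
proof -
  have "G 1 1 = G k k" using validI_diag[OF v, of k] by metis
  also have "\<dots> = G' k k" using fun_cong[OF e, of 1] by (simp add: Tm_def)
  also have "\<dots> = G' 1 1" using validI_diag[OF v', of k] by metis
  finally show ?thesis using bAct_evbar_inj[OF b v v'] by simp
qed

lemma finite_C:
  assumes b: "bAct M" shows "finite {H. validI M H}"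
proof -
  have "inj_on (\<lambda>H. H 1 1) {H. validI M H}"
    using bAct_evbar_inj[OF b] by (auto intro: inj_onI)
  moreover have "(\<lambda>H. H 1 1) ` {H. validI M H} \<subseteq> iset_carrier M" using validI_car by blast
  moreover have "finite (iset_carrier M)" using b unfolding bAct_def by blast
  ultimately show ?thesis by (meson finite_imageD finite_subset)
qed

lemma Tm_surj:
  assumes b: "bAct M" and v: "validI M G" shows "\<exists>F. validI M F \<and> Tm k F = G"
proof -
  have "Tm k ` {H. validI M H} = {H. validI M H}"
    by (rule endo_inj_surj[OF finite_C[OF b]]) (auto intro: inj_onI Tm_valid dest: Tm_inj[OF b])
  thus ?thesis using v by (metis (mono_tags, lifting) imageE mem_Collect_eq)
qed

definition gmap :: "('i::monoid_mult, 'a) iset \<Rightarrow> ('i \<Rightarrow> 'i \<Rightarrow> 'a) \<Rightarrow> 'i \<Rightarrow> 'i \<Rightarrow> ('i \<Rightarrow> 'i \<Rightarrow> 'a)" where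
  "gmap M G = (\<lambda>j x. SOME F. validI M F \<and> Tm x F = Tm j G)"

lemma gmap_prop:
  assumes b: "bAct M" and v: "validI M G"
  shows "validI M (gmap M G j x) \<and> Tm x (gmap M G j x) = Tm j G"
  unfolding gmap_def by (rule someI_ex[OF Tm_surj[OF b Tm_valid[OF v]]])

lemma gmap_uniq:
  assumes b: "bAct M" and v: "validI M G" and vF: "validI M F" and e: "Tm x F = Tm j G"
  shows "gmap M G j x = F"
  using gmap_prop[OF b v, of j x] e Tm_inj[OF b _ vF] by metis

lemma valid_II:
  assumes b: "bAct M" and v: "validI M G" shows "validI (Inv M) (gmap M G)"
  unfolding validI_def[of "Inv M"]
proof (intro conjI allI)
  fix j x show "gmap M G j x \<in> iset_carrier (Inv M)" using gmap_prop[OF b v] by (simp add: carrier_Inv)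
next
  fix i j x
  let ?F = "gmap M G (j*i) (x*i)"
  have p: "validI M ?F" "Tm (x*i) ?F = Tm (j*i) G" using gmap_prop[OF b v] by auto
  have "Tm i (Tm x ?F) = Tm i (Tm j G)" using p(2) by (simp add: Tm_comp)
  hence "Tm x ?F = Tm j G" using Tm_inj[OF b Tm_valid[OF p(1)] Tm_valid[OF v]] by blast
  thus "gmap M G j x = ?F" using gmap_uniq[OF b v p(1)] by blast
next
  fix i j x
  let ?F = "gmap M G j (i*x)"
  have p: "validI M ?F" "Tm (i*x) ?F = Tm j G" using gmap_prop[OF b v] by auto
  have "Tm x (Tm i ?F) = Tm j G" using p(2) by (simp add: Tm_comp)
  hence "gmap M G j x = Tm i ?F" using gmap_uniq[OF b v Tm_valid[OF p(1)]] by blast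
  thus "iset_actr (Inv M) i ?F = iset_actl (Inv M) i (gmap M G j x)" by simp
qed

lemma II_rel:
  assumes v: "validI (Inv M) \<Phi>" shows "Tm x (\<Phi> j x) = Tm j (\<Phi> 1 1)"
proof -
  have "Tm j (\<Phi> 1 1) = \<Phi> j 1" using validI_0[OF v, of j] by simp
  moreover have "Tm x (\<Phi> j x) = \<Phi> j 1" using validI_b1[OF v, of x j] by simp
  ultimately show ?thesis by simp
qed

theorem mainTheorem13:
  shows
   "(\<forall>M :: ('i::monoid_mult, 'a) iset. bAct M \<longrightarrow>
       equivariant (Inv (Inv M)) (Inv M) evbar
     \<and> (\<exists>g. equivariant (Inv M) (Inv (Inv M)) g
           \<and> (\<forall>F\<in>iset_carrier (Inv (Inv M)). g (evbar F) = F)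
           \<and> (\<forall>f\<in>iset_carrier (Inv M). evbar (g f) = f)))
  \<and> (\<forall>(M :: ('i, 'a) iset) (N :: ('i, 'b) iset) u.
       bAct M \<longrightarrow> bAct N \<longrightarrow> equivariant M N u \<longrightarrow>
       (\<forall>F\<in>iset_carrier (Inv (Inv M)).
          evbar (Inv_mor (Inv_mor u) F) = Inv_mor u (evbar F)))"
proof (intro conjI allI impI)
  fix M :: "('i::monoid_mult, 'a) iset"
  assume b: "bAct M"
  show "equivariant (Inv (Inv M)) (Inv M) evbar"
    unfolding equivariant_def
  proof (intro conjI allI ballI)
    show "evbar ` iset_carrier (Inv (Inv M)) \<subseteq> iset_carrier (Inv M)"
      unfolding carrier_Inv[of "Inv M"] evbar_def using validI_car by blast
  next
    fix i and \<Phi> assume "\<Phi> \<in> iset_carrier (Inv (Inv M))"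
    hence v: "validI (Inv M) \<Phi>" by (simp add: carrier_Inv)
    show "iset_actr (Inv M) i (evbar (iset_actl (Inv (Inv M)) i \<Phi>)) =
          iset_actl (Inv M) i (evbar (iset_actr (Inv (Inv M)) i \<Phi>))"
      using II_rel[OF v, of 1 i] by (simp add: evbar_def Tm_def)
  qed
  show "\<exists>g. equivariant (Inv M) (Inv (Inv M)) g
           \<and> (\<forall>F\<in>iset_carrier (Inv (Inv M)). g (evbar F) = F)
           \<and> (\<forall>f\<in>iset_carrier (Inv M). evbar (g f) = f)"
  proof (intro exI conjI ballI)
    show "equivariant (Inv M) (Inv (Inv M)) (gmap M)"
      unfolding equivariant_def
    proof (intro conjI allI ballI)
      show "gmap M ` iset_carrier (Inv M) \<subseteq> iset_carrier (Inv (Inv M))"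
        using valid_II[OF b] by (auto simp: carrier_Inv)
    next
      fix i G assume "G \<in> iset_carrier (Inv M)"
      hence v: "validI M G" by (simp add: carrier_Inv)
      have "gmap M G (i*j) x = gmap M (Tm i G) j x" for j x
      proof -
        have p: "validI M (gmap M G (i*j) x)" "Tm x (gmap M G (i*j) x) = Tm (i*j) G"
          using gmap_prop[OF b v] by auto
        show ?thesis using gmap_uniq[OF b Tm_valid[OF v] p(1)] p(2) by (simp add: Tm_comp)
      qed
      thus "iset_actr (Inv (Inv M)) i (gmap M (iset_actl (Inv M) i G)) =
            iset_actl (Inv (Inv M)) i (gmap M (iset_actr (Inv M) i G))"
        by (simp add: Tm_def fun_eq_iff)
    qed
  next
    fix \<Phi> assume "\<Phi> \<in> iset_carrier (Inv (Inv M))"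
    hence v: "validI (Inv M) \<Phi>" by (simp add: carrier_Inv)
    have v1: "validI M (\<Phi> j x)" for j x using validI_car[OF v] by (simp add: carrier_Inv)
    have "gmap M (\<Phi> 1 1) j x = \<Phi> j x" for j x
      using gmap_uniq[OF b v1 v1 II_rel[OF v]] .
    thus "gmap M (evbar \<Phi>) = \<Phi>" by (simp add: evbar_def fun_eq_iff)
  next
    fix G assume "G \<in> iset_carrier (Inv M)"
    hence v: "validI M G" by (simp add: carrier_Inv)
    show "evbar (gmap M G) = G" unfolding evbar_def using gmap_uniq[OF b v v] by simp
  qed
next
  fix M :: "('i, 'a) iset" and N :: "('i, 'b) iset" and u
  show "\<forall>F\<in>iset_carrier (Inv (Inv M)). evbar (Inv_mor (Inv_mor u) F) = Inv_mor u (evbar F)"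
    by (simp add: evbar_def Inv_mor_def Map_mor_def)
qed

end
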